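(* Let $\mathsf{K}$ be any class of totally ordered residuated lattices that contains the algebras $\mathbf{A}$, $\mathbf{B}$, $\mathbf{C}$ described in the context. Then $\mathsf{K}$ does not have the one-sided amalgamation property.
   Context: A residuated lattice is an algebra $(L,\wedge,\vee,\cdot,\backslash,/,1)$ where $(L,\wedge,\vee)$ is a lattice, $(L,\cdot,1)$ is a monoid, and $xy\le z \iff y\le x\backslash z \iff x\le z/y$. It is integral if $1$ is the top element; commutative if $\cdot$ is commutative, in which case $x\backslash y=y/x$ is written $x\to y$. In a chain, $x\to y=\max\{z: xz\le y\}$, and in an integral chain $x\to y=1$ whenever $x\le y$. The algebras (all commutative, integral, totally ordered, with $1$ the multiplicative identity and top): - $\mathbf{A}$: universe $u<v<1$, $xy=\min(x,y)$, and $x\to y=1$ if $x\le y$, $x\to y=y$ otherwise. - $\mathbf{B}$: universe $u<b<v<1$, with $v\cdot v=v$, $v\cdot b=b$, $v\cdot u=u$, $b\cdot b=u$, $b\cdot u=u$, $u\cdot u=u$; residuals: $x\to y=1$ if $x\le y$, and $v\to b=b$, $v\to u=u$, $b\to u=b$. - $\mathbf{C}$: universe $u<d<c<v<1$, with $v\cdot v=v$, $v\cdot c=d$, $v\cdot d=d$, $v\cdot u=u$, $c\cdot c=c\cdot d=d\cdot d=u$, and $x\cdot u=u$ for all $x$; residuals: $x\to y=1$ if $x\le y$, and $v\to c=c$, $v\to d=c$, $v\to u=u$, $c\to d=v$, $c\to u=c$, $d\to u=c$. $\mathbf{A}$ is a subalgebra of both $\mathbf{B}$ and $\mathbf{C}$.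 A V-formation in a class $\mathsf{K}$ is a tuple $(\mathbf{P},\mathbf{Q},\mathbf{R},i,j)$ with $\mathbf{P},\mathbf{Q},\mathbf{R}\in\mathsf{K}$ and $i\colon\mathbf{P}\to\mathbf{Q}$, $j\colon\mathbf{P}\to\mathbf{R}$ embeddings. A one-amalgam of it in $\mathsf{K}$ is $(\mathbf{D},h,k)$ with $\mathbf{D}\in\mathsf{K}$, $h\colon\mathbf{Q}\to\mathbf{D}$ a homomorphism, $k\colon\mathbf{R}\to\mathbf{D}$ an embedding, and $h\circ i=k\circ j$. $\mathsf{K}$ has the one-sided amalgamation property (1AP) if every V-formation in $\mathsf{K}$ has a one-amalgam in $\mathsf{K}$. *)

theory Defs
  imports Main
begin

record 'a rl =
  carrier :: "'a set"
  meet :: "'a \<Rightarrow> 'a \<Rightarrow> 'a"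
  join :: "'a \<Rightarrow> 'a \<Rightarrow> 'a"
  mult :: "'a \<Rightarrow> 'a \<Rightarrow> 'a"
  ldiv :: "'a \<Rightarrow> 'a \<Rightarrow> 'a"
  rdiv :: "'a \<Rightarrow> 'a \<Rightarrow> 'a"
  one :: 'a

definition rle :: "('a, 'b) rl_scheme \<Rightarrow> 'a \<Rightarrow> 'a \<Rightarrow> bool" where
  "rle L x y \<longleftrightarrow> meet L x y = x"

definition residuated_lattice :: "('a, 'b) rl_scheme \<Rightarrow> bool" where
  "residuated_lattice L \<longleftrightarrow>
     carrier L \<noteq> {} \<and> one L \<in> carrier L \<and>
     (\<forall>x\<in>carrier L. \<forall>y\<in>carrier L.
        meet L x y \<in> carrier L \<and> join L x y \<in> carrier L \<and> mult L x y \<in> carrier L \<and>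
        ldiv L x y \<in> carrier L \<and> rdiv L x y \<in> carrier L) \<and>
     \<comment> \<open>lattice axioms\<close>
     (\<forall>x\<in>carrier L. \<forall>y\<in>carrier L. \<forall>z\<in>carrier L.
        meet L x (meet L y z) = meet L (meet L x y) z \<and>
        join L x (join L y z) = join L (join L x y) z) \<and>
     (\<forall>x\<in>carrier L. \<forall>y\<in>carrier L.
        meet L x y = meet L y x \<and> join L x y = join L y x \<and>
        meet L x (join L x y) = x \<and> join L x (meet L x y) = x) \<and>
     \<comment> \<open>monoid axioms\<close>
     (\<forall>x\<in>carrier L. \<forall>y\<in>carrier L. \<forall>z\<in>carrier L.
        mult L x (mult L y z) = mult L (mult L x y) z) \<and>
     (\<forall>x\<in>carrier L. mult L (one L) x = x \<and> mult L x (one L) = x) \<and>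
     \<comment> \<open>residuation\<close>
     (\<forall>x\<in>carrier L. \<forall>y\<in>carrier L. \<forall>z\<in>carrier L.
        (rle L (mult L x y) z \<longleftrightarrow> rle L y (ldiv L x z)) \<and>
        (rle L (mult L x y) z \<longleftrightarrow> rle L x (rdiv L z y)))"

definition totally_ordered_rl :: "('a, 'b) rl_scheme \<Rightarrow> bool" where
  "totally_ordered_rl L \<longleftrightarrow> residuated_lattice L \<and>
     (\<forall>x\<in>carrier L. \<forall>y\<in>carrier L. rle L x y \<or> rle L y x)"

definition rl_hom :: "'a rl \<Rightarrow> 'b rl \<Rightarrow> ('a \<Rightarrow> 'b) \<Rightarrow> bool" where
  "rl_hom L M f \<longleftrightarrow>
     (\<forall>x\<in>carrier L. f x \<in> carrier M) \<and> f (one L) = one M \<and>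
     (\<forall>x\<in>carrier L. \<forall>y\<in>carrier L.
        f (meet L x y) = meet M (f x) (f y) \<and> f (join L x y) = join M (f x) (f y) \<and>
        f (mult L x y) = mult M (f x) (f y) \<and> f (ldiv L x y) = ldiv M (f x) (f y) \<and>
        f (rdiv L x y) = rdiv M (f x) (f y))"

definition rl_emb :: "'a rl \<Rightarrow> 'b rl \<Rightarrow> ('a \<Rightarrow> 'b) \<Rightarrow> bool" where
  "rl_emb L M f \<longleftrightarrow> rl_hom L M f \<and> inj_on f (carrier L)"

definition rl_iso :: "'a rl \<Rightarrow> 'b rl \<Rightarrow> ('a \<Rightarrow> 'b) \<Rightarrow> bool" where
  "rl_iso L M f \<longleftrightarrow> rl_hom L M f \<and> bij_betw f (carrier L) (carrier M)"

text \<open>A class K is represented as a set of algebras on a common carrier type;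
  "K contains the algebra X" means K contains an isomorphic copy of X.\<close>

definition one_amalgam ::
  "'a rl set \<Rightarrow> 'a rl \<Rightarrow> 'a rl \<Rightarrow> 'a rl \<Rightarrow> ('a \<Rightarrow> 'a) \<Rightarrow> ('a \<Rightarrow> 'a)
    \<Rightarrow> 'a rl \<Rightarrow> ('a \<Rightarrow> 'a) \<Rightarrow> ('a \<Rightarrow> 'a) \<Rightarrow> bool" where
  "one_amalgam K P Q R i j D h k \<longleftrightarrow>
     D \<in> K \<and> rl_hom Q D h \<and> rl_emb R D k \<and> (\<forall>x\<in>carrier P. h (i x) = k (j x))"

definition has_1AP :: "'a rl set \<Rightarrow> bool" where
  "has_1AP K \<longleftrightarrow>
     (\<forall>P Q R i j. P \<in> K \<and> Q \<in> K \<and> R \<in> K \<and> rl_emb P Q i \<and> rl_emb P R j \<longrightarrow>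
        (\<exists>D h k. one_amalgam K P Q R i j D h k))"

text \<open>The concrete algebras, encoded on natural numbers.
  A: u=0, v=1, 1=2.  B: u=0, b=1, v=2, 1=3.  C: u=0, d=1, c=2, v=3, 1=4.\<close>

definition alg_A :: "nat rl" where
  "alg_A = \<lparr> carrier = {0,1,2}, meet = min, join = max, mult = min,
     ldiv = (\<lambda>x y. if x \<le> y then 2 else y), rdiv = (\<lambda>y x. if x \<le> y then 2 else y),
     one = 2 \<rparr>"

definition B_mult :: "nat \<Rightarrow> nat \<Rightarrow> nat" where
  "B_mult x y = (if x = 3 then y else if y = 3 then x
     else if x = 0 \<or> y = 0 then 0 else if x = 1 \<and> y = 1 then 0 else min x y)"

definition B_imp :: "nat \<Rightarrow> nat \<Rightarrow> nat" where
  "B_imp x y = (if x \<le> y then 3 else if x = 1 \<and> y = 0 then 1 else y)"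

definition alg_B :: "nat rl" where
  "alg_B = \<lparr> carrier = {0,1,2,3}, meet = min, join = max, mult = B_mult,
     ldiv = B_imp, rdiv = (\<lambda>y x. B_imp x y), one = 3 \<rparr>"

definition C_mult :: "nat \<Rightarrow> nat \<Rightarrow> nat" where
  "C_mult x y = (if x = 4 then y else if y = 4 then x
     else if x = 0 \<or> y = 0 then 0
     else if x = 3 \<and> y = 3 then 3
     else if x = 3 \<or> y = 3 then 1
     else 0)"

definition C_imp :: "nat \<Rightarrow> nat \<Rightarrow> nat" where
  "C_imp x y = (if x \<le> y then 4 else if x = 4 then y
     else if x = 3 then (if y = 0 then 0 else 2)
     else if x = 2 then (if y = 1 then 3 else 2)
     else 2)"

definition alg_C :: "nat rl" where
  "alg_C = \<lparr> carrier = {0,1,2,3,4}, meet = min, join = max, mult = C_mult,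
     ldiv = C_imp, rdiv = (\<lambda>y x. C_imp x y), one = 4 \<rparr>"

end

theory Submission
  imports Defs
begin

lemma rle_trans:
  assumes "residuated_lattice D" "a \<in> carrier D" "b \<in> carrier D" "c \<in> carrier D"
    "rle D a b" "rle D b c"
  shows "rle D a c"
proof -
  have "meet D a c = meet D (meet D a b) c" using assms(5) by (simp add: rle_def)
  also have "\<dots> = meet D a (meet D b c)" using assms(1-4) unfolding residuated_lattice_def by metis
  also have "\<dots> = a" using assms(5,6) by (simp add: rle_def)
  finally show ?thesis by (simp add: rle_def)
qed

lemma rle_antisym:
  assumes "residuated_lattice D" "a \<in> carrier D" "b \<in> carrier D"
    "rle D a b" "rle D b a"
  shows "a = b"
  using assms unfolding rle_def residuated_lattice_def by metis

lemma core:
  assumes tot: "totally_ordered_rl D"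
    and h: "rl_hom alg_B D h" and k: "rl_emb alg_C D k"
    and e0: "h 0 = k 0" and e2: "h 2 = k 3"
  shows False
proof -
  have RL: "residuated_lattice D" using tot by (simp add: totally_ordered_rl_def)
  have kh: "rl_hom alg_C D k" and kinj: "inj_on k {0,1,2,3,4}"
    using k by (auto simp: rl_emb_def alg_C_def)
  define x where "x = h 1"
  define y where "y = k 2"
  define y' where "y' = k 1"
  define U where "U = k 0"
  define V where "V = k 3"
  have cx: "x \<in> carrier D" using h by (simp add: x_def rl_hom_def alg_B_def)
  have cy: "y \<in> carrier D" "y' \<in> carrier D" "U \<in> carrier D" "V \<in> carrier D"
    using kh by (simp_all add: y_def y'_def U_def V_def rl_hom_def alg_C_def)
  have hm: "\<And>a b. a \<in> {0,1,2,3} \<Longrightarrow> b \<in> {0,1,2,3} \<Longrightarrow>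
     h (B_mult a b) = mult D (h a) (h b) \<and> h (B_imp a b) = ldiv D (h a) (h b)"
  proof -
    fix a b :: nat assume "a \<in> {0,1,2,3}" "b \<in> {0,1,2,3}"
    hence "a \<in> carrier alg_B" "b \<in> carrier alg_B" by (simp_all add: alg_B_def)
    hence "h (mult alg_B a b) = mult D (h a) (h b) \<and> h (ldiv alg_B a b) = ldiv D (h a) (h b)"
      using h unfolding rl_hom_def by blast
    thus "h (B_mult a b) = mult D (h a) (h b) \<and> h (B_imp a b) = ldiv D (h a) (h b)"
      by (simp add: alg_B_def)
  qed
  have km: "\<And>a b. a \<in> {0,1,2,3,4} \<Longrightarrow> b \<in> {0,1,2,3,4} \<Longrightarrow>
     k (C_mult a b) = mult D (k a) (k b) \<and> k (C_imp a b) = ldiv D (k a) (k b)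
     \<and> k (min a b) = meet D (k a) (k b)"
  proof -
    fix a b :: nat assume "a \<in> {0,1,2,3,4}" "b \<in> {0,1,2,3,4}"
    hence "a \<in> carrier alg_C" "b \<in> carrier alg_C" by (simp_all add: alg_C_def)
    hence "k (mult alg_C a b) = mult D (k a) (k b) \<and> k (ldiv alg_C a b) = ldiv D (k a) (k b)
       \<and> k (meet alg_C a b) = meet D (k a) (k b)"
      using kh unfolding rl_hom_def by blast
    thus "k (C_mult a b) = mult D (k a) (k b) \<and> k (C_imp a b) = ldiv D (k a) (k b)
     \<and> k (min a b) = meet D (k a) (k b)"
      by (simp add: alg_C_def)
  qed
  have xx: "mult D x x = U" using hm[of 1 1] e0 by (simp add: x_def U_def B_mult_def)
  have xU: "ldiv D x U = x" using hm[of 1 0] e0 by (simp add: x_def U_def B_imp_def)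
  have Vx: "mult D V x = x" using hm[of 2 1] e2 by (simp add: x_def V_def B_mult_def)
  have yy: "mult D y y = U" using km[of 2 2] by (simp add: y_def U_def C_mult_def)
  have Vy: "mult D V y = y'" using km[of 3 2] by (simp add: y_def y'_def V_def C_mult_def)
  have y'U: "ldiv D y' U = y" using km[of 1 0] by (simp add: y_def y'_def U_def C_imp_def)
  have y'y: "rle D y' y" using km[of 1 2] by (simp add: y_def y'_def rle_def)
  have yne: "y \<noteq> y'" using kinj by (simp add: y_def y'_def inj_on_def)
  have res: "\<And>a b c. a \<in> carrier D \<Longrightarrow> b \<in> carrier D \<Longrightarrow> c \<in> carrier D \<Longrightarrow>
      (rle D (mult D a b) c \<longleftrightarrow> rle D b (ldiv D a c)) \<and>
      (rle D (mult D a b) c \<longleftrightarrow> rle D a (rdiv D c b))"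
    using RL unfolding residuated_lattice_def by blast
  have cl: "\<And>a b. a \<in> carrier D \<Longrightarrow> b \<in> carrier D \<Longrightarrow> rdiv D a b \<in> carrier D"
    using RL unfolding residuated_lattice_def by blast
  have refl: "\<And>a. a \<in> carrier D \<Longrightarrow> rle D a a"
    using RL unfolding residuated_lattice_def rle_def by metis
  have "x \<noteq> y" using Vx Vy yne by auto
  have total: "rle D x y \<or> rle D y x" using tot cx cy unfolding totally_ordered_rl_def by blast
  show False
  proof (cases "rle D x y")
    case True
    have "rle D y (rdiv D U y)" using res[of y y U] yy refl cy by simp
    hence "rle D x (rdiv D U y)" using rle_trans[OF RL cx cy(1) cl[OF cy(3) cy(1)] True] by simp
    hence "rle D (mult D x y) U" using res[of x y U] cx cy by blast
    hence "rle D y x" using res[of x y U] cx cy xU by auto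
    thus False using rle_antisym[OF RL cx cy(1) True] \<open>x \<noteq> y\<close> by simp
  next
    case False
    hence yx: "rle D y x" using total by simp
    have "rle D x (rdiv D U x)" using res[of x x U] xx refl cx cy by simp
    hence "rle D y' (rdiv D U x)"
      using rle_trans[OF RL cy(2) cy(1) cx y'y yx] rle_trans[OF RL cy(2) cx cl[OF cy(3) cx]] by simp
    hence "rle D (mult D y' x) U" using res[of y' x U] cx cy by blast
    hence "rle D x y" using res[of y' x U] cx cy y'U by auto
    thus False using False by simp
  qed
qed


lemma hom_comp:
  assumes "rl_hom L M f" "rl_hom M N g"
  shows "rl_hom L N (g \<circ> f)"
  using assms unfolding rl_hom_def by auto

lemma emb_comp:
  assumes "rl_emb L M f" "rl_emb M N g"
  shows "rl_emb L N (g \<circ> f)"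
proof -
  have "f ` carrier L \<subseteq> carrier M" using assms(1) by (auto simp: rl_emb_def rl_hom_def)
  hence "inj_on g (f ` carrier L)" using assms(2) inj_on_subset by (auto simp: rl_emb_def)
  thus ?thesis using assms hom_comp comp_inj_on unfolding rl_emb_def by metis
qed

lemma iso_emb: "rl_iso L M f \<Longrightarrow> rl_emb L M f"
  by (simp add: rl_iso_def rl_emb_def bij_betw_def)

lemma iso_inv_emb:
  assumes iso: "rl_iso L M f"
    and clo: "\<forall>x\<in>carrier L. \<forall>y\<in>carrier L.
        meet L x y \<in> carrier L \<and> join L x y \<in> carrier L \<and> mult L x y \<in> carrier L \<and>
        ldiv L x y \<in> carrier L \<and> rdiv L x y \<in> carrier L"
    and one: "one L \<in> carrier L"
  shows "rl_emb M L (inv_into (carrier L) f)"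
proof -
  have bij: "bij_betw f (carrier L) (carrier M)" and hom: "rl_hom L M f"
    using iso by (auto simp: rl_iso_def)
  let ?g = "inv_into (carrier L) f"
  have inj: "inj_on f (carrier L)" using bij by (simp add: bij_betw_def)
  have im: "f ` carrier L = carrier M" using bij by (simp add: bij_betw_def)
  have gf: "\<And>a. a \<in> carrier L \<Longrightarrow> ?g (f a) = a" using inj by (simp add: inv_into_f_f)
  have ops: "\<And>op opM. (\<forall>a\<in>carrier L. \<forall>b\<in>carrier L. op a b \<in> carrier L \<and> f (op a b) = opM (f a) (f b))
     \<Longrightarrow> \<forall>x\<in>carrier M. \<forall>y\<in>carrier M. ?g (opM x y) = op (?g x) (?g y)"
  proof (intro ballI)
    fix op opM x y
    assume H: "\<forall>a\<in>carrier L. \<forall>b\<in>carrier L. op a b \<in> carrier L \<and> f (op a b) = opM (f a) (f b)"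
      and x: "x \<in> carrier M" and y: "y \<in> carrier M"
    obtain a where a: "a \<in> carrier L" "x = f a" using x im by auto
    obtain b where b: "b \<in> carrier L" "y = f b" using y im by auto
    show "?g (opM x y) = op (?g x) (?g y)" using H a b gf by metis
  qed
  have h1: "\<forall>x\<in>carrier M. ?g x \<in> carrier L"
    using im by (metis inv_into_into)
  have h2: "?g (one M) = one L" using hom gf one by (metis rl_hom_def)
  have h3: "\<forall>x\<in>carrier M. \<forall>y\<in>carrier M.
        ?g (meet M x y) = meet L (?g x) (?g y) \<and> ?g (join M x y) = join L (?g x) (?g y) \<and>
        ?g (mult M x y) = mult L (?g x) (?g y) \<and> ?g (ldiv M x y) = ldiv L (?g x) (?g y) \<and>
        ?g (rdiv M x y) = rdiv L (?g x) (?g y)"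
  proof -
    have A: "\<forall>x\<in>carrier M. \<forall>y\<in>carrier M. ?g (meet M x y) = meet L (?g x) (?g y)"
      by (rule ops) (use clo hom in \<open>simp add: rl_hom_def\<close>)
    have B: "\<forall>x\<in>carrier M. \<forall>y\<in>carrier M. ?g (join M x y) = join L (?g x) (?g y)"
      by (rule ops) (use clo hom in \<open>simp add: rl_hom_def\<close>)
    have C: "\<forall>x\<in>carrier M. \<forall>y\<in>carrier M. ?g (mult M x y) = mult L (?g x) (?g y)"
      by (rule ops) (use clo hom in \<open>simp add: rl_hom_def\<close>)
    have D: "\<forall>x\<in>carrier M. \<forall>y\<in>carrier M. ?g (ldiv M x y) = ldiv L (?g x) (?g y)"
      by (rule ops) (use clo hom in \<open>simp add: rl_hom_def\<close>)
    have E: "\<forall>x\<in>carrier M. \<forall>y\<in>carrier M. ?g (rdiv M x y) = rdiv L (?g x) (?g y)"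
      by (rule ops) (use clo hom in \<open>simp add: rl_hom_def\<close>)
    show ?thesis using A B C D E by blast
  qed
  have "inj_on ?g (carrier M)" using im inj_on_inv_into by (metis order_refl)
  thus ?thesis using h1 h2 h3 by (simp add: rl_emb_def rl_hom_def)
qed

definition eAB :: "nat \<Rightarrow> nat" where "eAB a = (if a = 0 then 0 else a + 1)"
definition eAC :: "nat \<Rightarrow> nat" where "eAC a = (if a = 0 then 0 else a + 2)"

lemma eAB_emb: "rl_emb alg_A alg_B eAB"
  unfolding rl_emb_def rl_hom_def alg_A_def alg_B_def eAB_def inj_on_def
  by (simp add: B_mult_def B_imp_def)

lemma eAC_emb: "rl_emb alg_A alg_C eAC"
  unfolding rl_emb_def rl_hom_def alg_A_def alg_C_def eAC_def inj_on_def
  by (simp add: C_mult_def C_imp_def)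

lemma A_clo: "\<forall>x\<in>carrier alg_A. \<forall>y\<in>carrier alg_A.
        meet alg_A x y \<in> carrier alg_A \<and> join alg_A x y \<in> carrier alg_A \<and> mult alg_A x y \<in> carrier alg_A \<and>
        ldiv alg_A x y \<in> carrier alg_A \<and> rdiv alg_A x y \<in> carrier alg_A"
  by (simp add: alg_A_def)

theorem mainTheorem3:
  fixes K :: "'a rl set"
  assumes "\<forall>L\<in>K. totally_ordered_rl L"
    and "\<exists>L\<in>K. \<exists>f. rl_iso alg_A L f"
    and "\<exists>L\<in>K. \<exists>f. rl_iso alg_B L f"
    and "\<exists>L\<in>K. \<exists>f. rl_iso alg_C L f"
  shows "\<not> has_1AP K"
proof
  assume ap: "has_1AP K"
  obtain LA fA where LA: "LA \<in> K" "rl_iso alg_A LA fA" using assms(2) by blast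
  obtain LB fB where LB: "LB \<in> K" "rl_iso alg_B LB fB" using assms(3) by blast
  obtain LC fC where LC: "LC \<in> K" "rl_iso alg_C LC fC" using assms(4) by blast
  define g where "g = inv_into (carrier alg_A) fA"
  have g: "rl_emb LA alg_A g" unfolding g_def
    by (rule iso_inv_emb[OF LA(2) A_clo]) (simp add: alg_A_def)
  define i where "i = fB \<circ> (eAB \<circ> g)"
  define j where "j = fC \<circ> (eAC \<circ> g)"
  have i: "rl_emb LA LB i" unfolding i_def
    by (rule emb_comp[OF emb_comp[OF g eAB_emb] iso_emb[OF LB(2)]])
  have j: "rl_emb LA LC j" unfolding j_def
    by (rule emb_comp[OF emb_comp[OF g eAC_emb] iso_emb[OF LC(2)]])
  obtain D h k where am: "one_amalgam K LA LB LC i j D h k"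
    using ap LA LB LC i j unfolding has_1AP_def by blast
  have injA: "inj_on fA {0,1,2}" using LA(2) by (simp add: rl_iso_def bij_betw_def alg_A_def)
  have cA: "fA ` {0,1,2} \<subseteq> carrier LA" using LA(2) by (auto simp: rl_iso_def rl_hom_def alg_A_def)
  have gf: "\<And>a. a \<in> {0,1,2} \<Longrightarrow> g (fA a) = a" unfolding g_def using injA
    by (simp add: alg_A_def inv_into_f_f)
  have compat: "\<forall>x\<in>carrier LA. h (i x) = k (j x)" using am by (simp add: one_amalgam_def)
  have c: "\<And>a. a \<in> {0,1,2} \<Longrightarrow> h (fB (eAB a)) = k (fC (eAC a))"
  proof -
    fix a :: nat assume a: "a \<in> {0,1,2}"
    hence "fA a \<in> carrier LA" using cA by auto
    hence "h (i (fA a)) = k (j (fA a))" using compat by blast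
    thus "h (fB (eAB a)) = k (fC (eAC a))" using gf[OF a] by (simp add: i_def j_def)
  qed
  have e0: "(h \<circ> fB) 0 = (k \<circ> fC) 0" using c[of 0] by (simp add: eAB_def eAC_def)
  have e2: "(h \<circ> fB) 2 = (k \<circ> fC) 3" using c[of 1] by (simp add: eAB_def eAC_def numeral_2_eq_2 numeral_3_eq_3)
  have tot: "totally_ordered_rl D" using am assms(1) by (simp add: one_amalgam_def)
  have hB: "rl_hom alg_B D (h \<circ> fB)"
    using hom_comp LB(2) am by (metis rl_iso_def one_amalgam_def)
  have kC: "rl_emb alg_C D (k \<circ> fC)"
  proof -
    have "rl_emb LC D k" using am by (simp add: one_amalgam_def)
    thus ?thesis by (rule emb_comp[OF iso_emb[OF LC(2)]])
  qed
  show False by (rule core[OF tot hB kC e0 e2])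
qed

end
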